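(* Let $X$ be a complex manifold of dimension $n$, $\chi$ a positive definite $(1,1)$-form, $\omega$ a real $(1,1)$-form, and $\theta\in(0,\pi)$. (a) If $\omega\in\Gamma_{\chi,\theta}$, then there exists $C>0$ depending only on $\theta,n$ such that $C\,(\omega-\cot(\theta)\chi+\chi)^n\ge G^n_\theta(\omega,\chi)$. (b) If $\omega\in\Gamma_{\chi,\theta-\delta}$ for some $\delta\in(0,\theta)$, then, with $\Omega:=\omega-\cot(\theta)\chi$, there exists $\epsilon>0$ depending only on $\theta,n,\delta$ such that $P^k_\theta(\Omega,\chi)\ge\epsilon\,\Omega^k$ for $k=1,\dots,n-1$.
   Context: For real $(1,1)$-forms $\alpha,\beta$ and integers $k\ge0$: $G^k_\theta(\alpha,\beta):=\mathrm{Re}(\alpha+\sqrt{-1}\beta)^k-\cot(\theta)\,\mathrm{Im}(\alpha+\sqrt{-1}\beta)^k$ (wedge powers) and $P^k_\theta(\alpha,\beta):=G^k_\theta(\alpha+\cot(\theta)\beta,\beta)$. Inequalities between real $(k,k)$-forms mean that the difference is a positive $(k,k)$-form in the sense of Demailly (for these polynomial expressions in two real $(1,1)$-forms, one of them positive, strong and weak positivity coincide; for $(n,n)$-forms it means a nonnegative density). For eigenvalues $\lambda_i$ of $\omega$ with respect to $\chi$ and $\mathrm{arccot}$ valued in $(0,\pi)$, $\omega\in\Gamma_{\chi,\theta}$ means $\sum_{i\in I}\mathrm{arccot}(\lambda_i)<\theta$ for every $I$ with $|I|=n-1$, pointwise. *)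

theory Defs
  imports Complex_Main
begin

text \<open>Pointwise model. At a point of an n-dimensional complex manifold we use
 holomorphic coordinates z_0,...,z_{n-1}. A complex (k,k)-form is represented by its
 coefficient function on pairs (I,J) of k-subsets of {0..<n}, with respect to the basis
 e_{I,J} = sigma_k dz_I wedge dzbar_J, sigma_k = i^k (-1)^(k(k-1)/2), indices increasing.
 For (1,1)-forms e_{i,j} = i dz_i wedge dzbar_j, and e_{[n],[n]} is the standard
 positive volume form.\<close>

type_synonym form = "nat set \<Rightarrow> nat set \<Rightarrow> complex"

text \<open>Sign of the shuffle: dz_I wedge dz_K = shuffle_sign I K * dz_{I union K}.\<close>
definition shuffle_sign :: "nat set \<Rightarrow> nat set \<Rightarrow> complex" where
  "shuffle_sign I K = (-1) ^ card {(i, k). i \<in> I \<and> k \<in> K \<and> k < i}"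

text \<open>Wedge product (on forms of even bidegree (p,p),(q,q)):
  e_{I,J} wedge e_{K,L} = shuffle_sign I K * shuffle_sign J L * e_{I union K, J union L}.\<close>
definition wedge :: "form \<Rightarrow> form \<Rightarrow> form" where
  "wedge u v M N = (\<Sum>I\<in>Pow M. \<Sum>J\<in>Pow N.
      shuffle_sign I (M - I) * shuffle_sign J (N - J) * u I J * v (M - I) (N - J))"

definition form_one :: form where
  "form_one I J = (if I = {} \<and> J = {} then 1 else 0)"

primrec form_pow :: "form \<Rightarrow> nat \<Rightarrow> form" where
  "form_pow u 0 = form_one"
| "form_pow u (Suc k) = wedge u (form_pow u k)"

text \<open>The (1,1)-form sum_{i,j<n} A i j * (i dz_i wedge dzbar_j).\<close>
definition form11 :: "nat \<Rightarrow> (nat \<Rightarrow> nat \<Rightarrow> complex) \<Rightarrow> form" where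
  "form11 n A I J = (if card I = 1 \<and> card J = 1 \<and> I \<subseteq> {..<n} \<and> J \<subseteq> {..<n}
      then A (the_elem I) (the_elem J) else 0)"

definition form_add :: "form \<Rightarrow> form \<Rightarrow> form" where
  "form_add u v = (\<lambda>I J. u I J + v I J)"

definition form_diff :: "form \<Rightarrow> form \<Rightarrow> form" where
  "form_diff u v = (\<lambda>I J. u I J - v I J)"

definition form_scale :: "complex \<Rightarrow> form \<Rightarrow> form" where
  "form_scale c u = (\<lambda>I J. c * u I J)"

text \<open>Complex conjugation of forms: conj(e_{I,J}) = e_{J,I}.\<close>
definition form_cnj :: "form \<Rightarrow> form" where
  "form_cnj u = (\<lambda>I J. cnj (u J I))"

definition form_Re :: "form \<Rightarrow> form" where
  "form_Re u = form_scale (1/2) (form_add u (form_cnj u))"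

definition form_Im :: "form \<Rightarrow> form" where
  "form_Im u = form_scale (1/(2*\<i>)) (form_diff u (form_cnj u))"

definition G_form :: "real \<Rightarrow> nat \<Rightarrow> form \<Rightarrow> form \<Rightarrow> form" where
  "G_form \<theta> k \<alpha> \<beta> =
     (let F = form_pow (form_add \<alpha> (form_scale \<i> \<beta>)) k
      in form_diff (form_Re F) (form_scale (of_real (cot \<theta>)) (form_Im F)))"

definition P_form :: "real \<Rightarrow> nat \<Rightarrow> form \<Rightarrow> form \<Rightarrow> form" where
  "P_form \<theta> k \<alpha> \<beta> = G_form \<theta> k (form_add \<alpha> (form_scale (of_real (cot \<theta>)) \<beta>)) \<beta>"

text \<open>Positivity (Demailly): a (k,k)-form u on C^n is positive iff
 u wedge (i a_1 wedge conj a_1) wedge ... wedge (i a_{n-k} wedge conj a_{n-k})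
 is a nonnegative multiple of the volume form for all (1,0)-forms a_j = sum_i a_j i dz_i.\<close>
definition pos_form :: "nat \<Rightarrow> nat \<Rightarrow> form \<Rightarrow> bool" where
  "pos_form n k u \<longleftrightarrow> (\<forall>as :: (nat \<Rightarrow> complex) list. length as = n - k \<longrightarrow>
     (let w = wedge u (foldr (\<lambda>a acc. wedge (form11 n (\<lambda>i j. a i * cnj (a j))) acc) as form_one)
                {..<n} {..<n}
      in Im w = 0 \<and> 0 \<le> Re w))"

definition form_ge :: "nat \<Rightarrow> nat \<Rightarrow> form \<Rightarrow> form \<Rightarrow> bool" where
  "form_ge n k u v \<longleftrightarrow> pos_form n k (form_diff u v)"

text \<open>Real (1,1)-forms correspond to hermitian coefficient matrices.\<close>
definition hermitian :: "nat \<Rightarrow> (nat \<Rightarrow> nat \<Rightarrow> complex) \<Rightarrow> bool" where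
  "hermitian n A \<longleftrightarrow> (\<forall>i<n. \<forall>j<n. A i j = cnj (A j i))"

definition posdef :: "nat \<Rightarrow> (nat \<Rightarrow> nat \<Rightarrow> complex) \<Rightarrow> bool" where
  "posdef n A \<longleftrightarrow> hermitian n A \<and>
     (\<forall>v :: nat \<Rightarrow> complex. (\<exists>i<n. v i \<noteq> 0) \<longrightarrow>
        0 < Re (\<Sum>i<n. \<Sum>j<n. A i j * v i * cnj (v j)))"

text \<open>lam are the eigenvalues of omega w.r.t. chi: simultaneous diagonalization
 (change of basis P) with chi becoming the identity and omega becoming diag(lam).\<close>
definition gen_eigenvalues :: "nat \<Rightarrow> (nat \<Rightarrow> nat \<Rightarrow> complex) \<Rightarrow> (nat \<Rightarrow> nat \<Rightarrow> complex)
    \<Rightarrow> (nat \<Rightarrow> real) \<Rightarrow> bool" where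
  "gen_eigenvalues n chi omega lam \<longleftrightarrow> (\<exists>P :: nat \<Rightarrow> nat \<Rightarrow> complex.
     (\<forall>i<n. \<forall>j<n. (\<Sum>a<n. \<Sum>b<n. P a i * chi a b * cnj (P b j)) = (if i = j then 1 else 0)) \<and>
     (\<forall>i<n. \<forall>j<n. (\<Sum>a<n. \<Sum>b<n. P a i * omega a b * cnj (P b j)) =
                    (if i = j then of_real (lam i) else 0)))"

text \<open>arccot with values in (0, pi).\<close>
definition arccot :: "real \<Rightarrow> real" where
  "arccot x = pi / 2 - arctan x"

definition in_Gamma :: "nat \<Rightarrow> (nat \<Rightarrow> nat \<Rightarrow> complex) \<Rightarrow> (nat \<Rightarrow> nat \<Rightarrow> complex) \<Rightarrow> real \<Rightarrow> bool" where
  "in_Gamma n chi omega \<theta> \<longleftrightarrow> (\<exists>lam. gen_eigenvalues n chi omega lam \<and>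
     (\<forall>I \<subseteq> {..<n}. card I = n - 1 \<longrightarrow> (\<Sum>i\<in>I. arccot (lam i)) < \<theta>))"

end

theory Submission
  imports Defs "Jordan_Normal_Form.Determinant"
begin

type_synonym hform = "nat set \<Rightarrow> complex"

definition wedge1 :: "hform \<Rightarrow> hform \<Rightarrow> hform" where
  "wedge1 h g M = (\<Sum>I\<in>Pow M. shuffle_sign I (M - I) * h I * g (M - I))"

definition TT :: "hform \<Rightarrow> form" where
  "TT h = (\<lambda>I J. h I * cnj (h J))"

definition h0 :: hform where "h0 = (\<lambda>I. if I = {} then 1 else 0)"

definition rho :: "nat \<Rightarrow> (nat \<Rightarrow> complex) \<Rightarrow> hform" where
  "rho n r = (\<lambda>I. if card I = 1 \<and> I \<subseteq> {..<n} then r (the_elem I) else 0)"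

lemma cnj_shuffle_sign[simp]: "cnj (shuffle_sign I K) = shuffle_sign I K"
  by (simp add: shuffle_sign_def)

lemma wedge_TT: "wedge (TT h) (TT g) = TT (wedge1 h g)"
  apply (rule ext)+
  apply (simp add: wedge_def TT_def wedge1_def sum_product cnj_sum)
  apply (rule sum.cong, simp)+
  apply (simp add: algebra_simps)
  done

lemma form_one_TT: "form_one = TT h0"
  by (auto simp: form_one_def TT_def h0_def intro!: ext)

lemma form11_TT: "form11 n (\<lambda>i j. a i * cnj (a j)) = TT (rho n a)"
  by (auto simp: form11_def TT_def rho_def intro!: ext)

lemma foldr_TT: "foldr (\<lambda>a acc. wedge (form11 n (\<lambda>i j. a i * cnj (a j))) acc) as form_one
   = TT (foldr (\<lambda>a acc. wedge1 (rho n a) acc) as h0)"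
  by (induction as) (simp_all add: form_one_TT form11_TT wedge_TT)

lemma wedge_sum_left:
  "wedge (\<lambda>I J. \<Sum>x\<in>X. c x * u x I J) v M N = (\<Sum>x\<in>X. c x * wedge (u x) v M N)"
proof -
  have "wedge (\<lambda>I J. \<Sum>x\<in>X. c x * u x I J) v M N =
    (\<Sum>I\<in>Pow M. \<Sum>J\<in>Pow N. \<Sum>x\<in>X. c x * (shuffle_sign I (M - I) * shuffle_sign J (N - J) * u x I J * v (M - I) (N - J)))"
    by (simp add: wedge_def sum_distrib_left sum_distrib_right algebra_simps)
  also have "\<dots> = (\<Sum>I\<in>Pow M. \<Sum>x\<in>X. \<Sum>J\<in>Pow N. c x * (shuffle_sign I (M - I) * shuffle_sign J (N - J) * u x I J * v (M - I) (N - J)))"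
    by (rule sum.cong[OF refl], rule sum.swap)
  also have "\<dots> = (\<Sum>x\<in>X. \<Sum>I\<in>Pow M. \<Sum>J\<in>Pow N. c x * (shuffle_sign I (M - I) * shuffle_sign J (N - J) * u x I J * v (M - I) (N - J)))"
    by (rule sum.swap)
  also have "\<dots> = (\<Sum>x\<in>X. c x * wedge (u x) v M N)"
    by (simp add: wedge_def sum_distrib_left)
  finally show ?thesis .
qed

lemma wedge_sum_right:
  "wedge v (\<lambda>I J. \<Sum>x\<in>X. c x * u x I J) M N = (\<Sum>x\<in>X. c x * wedge v (u x) M N)"
proof -
  have "wedge v (\<lambda>I J. \<Sum>x\<in>X. c x * u x I J) M N =
    (\<Sum>I\<in>Pow M. \<Sum>J\<in>Pow N. \<Sum>x\<in>X. c x * (shuffle_sign I (M - I) * shuffle_sign J (N - J) * v I J * u x (M - I) (N - J)))"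
    by (simp add: wedge_def sum_distrib_left sum_distrib_right algebra_simps)
  also have "\<dots> = (\<Sum>I\<in>Pow M. \<Sum>x\<in>X. \<Sum>J\<in>Pow N. c x * (shuffle_sign I (M - I) * shuffle_sign J (N - J) * v I J * u x (M - I) (N - J)))"
    by (rule sum.cong[OF refl], rule sum.swap)
  also have "\<dots> = (\<Sum>x\<in>X. \<Sum>I\<in>Pow M. \<Sum>J\<in>Pow N. c x * (shuffle_sign I (M - I) * shuffle_sign J (N - J) * v I J * u x (M - I) (N - J)))"
    by (rule sum.swap)
  also have "\<dots> = (\<Sum>x\<in>X. c x * wedge v (u x) M N)"
    by (simp add: wedge_def sum_distrib_left)
  finally show ?thesis .
qed

lemma shuffle_single: "shuffle_sign {i} K = (-1) ^ card {k\<in>K. k < i}"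
proof -
  have "{(a, k). a \<in> {i} \<and> k \<in> K \<and> k < a} = (\<lambda>k. (i, k)) ` {k\<in>K. k < i}" by auto
  moreover have "card ((\<lambda>k. (i, k)) ` {k\<in>K. k < i}) = card {k\<in>K. k < i}"
    by (rule card_image) (auto simp: inj_on_def)
  ultimately show ?thesis by (simp add: shuffle_sign_def)
qed

lemma shuffle_single_insert:
  assumes "j \<notin> N"
  shows "shuffle_sign {i} (insert j N) = (if j < i then -1 else 1) * shuffle_sign {i} N"
proof (cases "j < i")
  case True
  have "{k\<in>insert j N. k < i} = insert j {k\<in>N. k < i}" using True by auto
  moreover have "finite {k\<in>N. k < i}" by simp
  ultimately show ?thesis using True assms by (simp add: shuffle_single)
next
  case False
  have "{k\<in>insert j N. k < i} = {k\<in>N. k < i}" using False by auto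
  then show ?thesis using False by (simp add: shuffle_single)
qed

lemma if_neg: "(if c then - a else 0) = - (if c then a else (0::complex))" by simp

definition oneform :: "hform \<Rightarrow> bool" where
  "oneform h \<longleftrightarrow> (\<forall>I. card I \<noteq> 1 \<longrightarrow> h I = 0)"

lemma oneform_rho: "oneform (rho n r)"
  by (simp add: oneform_def rho_def)

lemma wedge1_one:
  assumes "oneform h"
  shows "wedge1 h X M = (\<Sum>i\<in>M. shuffle_sign {i} (M - {i}) * h {i} * X (M - {i}))"
proof (cases "finite M")
  case True
  have "wedge1 h X M = (\<Sum>I\<in>(\<lambda>i. {i}) ` M. shuffle_sign I (M - I) * h I * X (M - I))"
    unfolding wedge1_def
    apply (rule sum.mono_neutral_right)
    using True apply simp
     apply auto[1]
    using assms unfolding oneform_def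
    apply (auto simp: card_1_singleton_iff)
    done
  also have "\<dots> = (\<Sum>i\<in>M. shuffle_sign {i} (M - {i}) * h {i} * X (M - {i}))"
    by (subst sum.reindex) (auto simp: inj_on_def)
  finally show ?thesis .
next
  case False
  then show ?thesis by (simp add: wedge1_def)
qed

lemma double_sum_excl:
  "(\<Sum>i\<in>M. \<Sum>j\<in>M - {i}. f i j) = (\<Sum>i\<in>M. \<Sum>j\<in>M. if j \<noteq> i then f i j else 0)"
proof (cases "finite M")
  case True
  show ?thesis
  proof (rule sum.cong[OF refl])
    fix i assume "i \<in> M"
    show "(\<Sum>j\<in>M - {i}. f i j) = (\<Sum>j\<in>M. if j \<noteq> i then f i j else 0)"
    proof -
      have "M - {i} = {j\<in>M. j \<noteq> i}" by auto
      then show ?thesis using True by (simp add: sum.inter_filter)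
    qed
  qed
next
  case False
  then show ?thesis by simp
qed

lemma wedge1_swap:
  assumes a: "oneform a" and b: "oneform b"
  shows "wedge1 a (wedge1 b X) M = - wedge1 b (wedge1 a X) M"
proof -
  define F where "F i j = shuffle_sign {i} (M - {i}) * shuffle_sign {j} (M - {i} - {j}) * a {i} * b {j} * X (M - {i} - {j})" for i j
  define G where "G j i = shuffle_sign {j} (M - {j}) * shuffle_sign {i} (M - {j} - {i}) * b {j} * a {i} * X (M - {j} - {i})" for i j
  have key: "F i j = - G j i" if "i \<in> M" "j \<in> M" "i \<noteq> j" for i j
  proof -
    have e1: "M - {i} = insert j (M - {i} - {j})" using that by auto
    have e2: "M - {j} = insert i (M - {i} - {j})" using that by auto
    have e3: "M - {j} - {i} = M - {i} - {j}" by auto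
    have s1: "shuffle_sign {i} (M - {i}) = (if j < i then -1 else 1) * shuffle_sign {i} (M - {i} - {j})"
      by (subst e1, rule shuffle_single_insert) simp
    have s2: "shuffle_sign {j} (M - {j}) = (if i < j then -1 else 1) * shuffle_sign {j} (M - {i} - {j})"
      by (subst e2, rule shuffle_single_insert) simp
    show ?thesis unfolding F_def G_def s1 s2 e3 using that
      by (cases "i < j") (auto simp: algebra_simps)
  qed
  have "wedge1 a (wedge1 b X) M = (\<Sum>i\<in>M. \<Sum>j\<in>M - {i}. F i j)"
    by (simp add: wedge1_one[OF a] wedge1_one[OF b] F_def sum_distrib_left algebra_simps)
  also have "\<dots> = (\<Sum>i\<in>M. \<Sum>j\<in>M. if j \<noteq> i then F i j else 0)" by (rule double_sum_excl)
  also have "\<dots> = (\<Sum>i\<in>M. \<Sum>j\<in>M. if j \<noteq> i then - G j i else 0)"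
    by (intro sum.cong refl) (auto simp: key)
  also have "\<dots> = (\<Sum>j\<in>M. \<Sum>i\<in>M. if i \<noteq> j then - G j i else 0)"
    by (subst sum.swap) (intro sum.cong refl, auto)
  also have "\<dots> = - (\<Sum>j\<in>M. \<Sum>i\<in>M. if i \<noteq> j then G j i else 0)"
    by (simp add: if_neg sum_negf)
  also have "\<dots> = - (\<Sum>j\<in>M. \<Sum>i\<in>M - {j}. G j i)"
    by (simp add: double_sum_excl)
  also have "(\<Sum>j\<in>M. \<Sum>i\<in>M - {j}. G j i) = wedge1 b (wedge1 a X) M"
    by (simp add: wedge1_one[OF a] wedge1_one[OF b] G_def sum_distrib_left algebra_simps)
  finally show ?thesis .
qed

lemma wedge1_self:
  assumes a: "oneform a"
  shows "wedge1 a (wedge1 a X) = (\<lambda>_. 0)"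
  using wedge1_swap[OF a a, of X] by (auto intro!: ext simp: complex_eq_iff)

lemma wedge1_zero: "wedge1 a (\<lambda>_. 0) = (\<lambda>_. 0)"
  by (simp add: wedge1_def fun_eq_iff)

definition gam :: "(nat \<Rightarrow> hform) \<Rightarrow> nat list \<Rightarrow> hform" where
  "gam \<rho> xs = foldr (\<lambda>j acc. wedge1 (\<rho> j) acc) xs h0"

lemma gam_Cons: "gam \<rho> (x # xs) = wedge1 (\<rho> x) (gam \<rho> xs)"
  by (simp add: gam_def)

lemma gam_mem_zero:
  assumes "\<And>j. oneform (\<rho> j)" "x \<in> set ys"
  shows "wedge1 (\<rho> x) (gam \<rho> ys) = (\<lambda>_. 0)"
  using assms(2)
proof (induction ys)
  case Nil then show ?case by simp
next
  case (Cons y zs)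
  show ?case
  proof (cases "x = y")
    case True
    then show ?thesis by (simp add: gam_Cons wedge1_self assms(1))
  next
    case False
    then have "x \<in> set zs" using Cons.prems by simp
    then have "wedge1 (\<rho> x) (gam \<rho> zs) = (\<lambda>_. 0)" by (rule Cons.IH)
    note h = this
    show ?thesis
    proof (rule ext)
      fix M
      have "wedge1 (\<rho> x) (gam \<rho> (y # zs)) M = - wedge1 (\<rho> y) (wedge1 (\<rho> x) (gam \<rho> zs)) M"
        unfolding gam_Cons by (rule wedge1_swap[OF assms(1) assms(1)])
      also have "\<dots> = 0" by (simp add: h wedge1_zero)
      finally show "wedge1 (\<rho> x) (gam \<rho> (y # zs)) M = 0" .
    qed
  qed
qed

lemma gam_nondistinct:
  assumes "\<And>j. oneform (\<rho> j)" "\<not> distinct xs"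
  shows "gam \<rho> xs = (\<lambda>_. 0)"
  using assms(2)
proof (induction xs)
  case Nil then show ?case by simp
next
  case (Cons x xs)
  show ?case
  proof (cases "x \<in> set xs")
    case True then show ?thesis by (simp add: gam_Cons gam_mem_zero assms(1))
  next
    case False
    then have "\<not> distinct xs" using Cons.prems by simp
    then show ?thesis by (simp add: gam_Cons Cons.IH wedge1_zero)
  qed
qed

definition LF :: "(nat \<Rightarrow> hform) \<Rightarrow> nat \<Rightarrow> (nat \<Rightarrow> complex) \<Rightarrow> form" where
  "LF \<rho> n \<mu> = (\<lambda>I J. \<Sum>j\<in>{..<n}. \<mu> j * TT (\<rho> j) I J)"

definition lists_len :: "nat \<Rightarrow> nat \<Rightarrow> nat list set" where
  "lists_len n k = {xs. set xs \<subseteq> {..<n} \<and> length xs = k}"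

definition SF :: "(nat \<Rightarrow> hform) \<Rightarrow> nat list set \<Rightarrow> (nat list \<Rightarrow> complex) \<Rightarrow> form" where
  "SF \<rho> X c = (\<lambda>I J. \<Sum>xs\<in>X. c xs * TT (gam \<rho> xs) I J)"

lemma finite_lists_len[simp]: "finite (lists_len n k)"
  unfolding lists_len_def by (rule finite_lists_length_eq) simp

lemma lists_len_0: "lists_len n 0 = {[]}"
  by (auto simp: lists_len_def)

lemma lists_len_Suc: "lists_len n (Suc k) = (\<lambda>(xs, j). j # xs) ` (lists_len n k \<times> {..<n})"
  unfolding lists_len_def by (rule lists_length_Suc_eq)

lemma form_pow_LF:
  "form_pow (LF \<rho> n \<mu>) k = SF \<rho> (lists_len n k) (\<lambda>xs. prod_list (map \<mu> xs))"
proof (induction k)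
  case 0
  show ?case by (auto simp: lists_len_0 SF_def form_one_TT gam_def intro!: ext)
next
  case (Suc k)
  show ?case
  proof (rule ext, rule ext)
    fix M N
    have "form_pow (LF \<rho> n \<mu>) (Suc k) M N = wedge (LF \<rho> n \<mu>) (SF \<rho> (lists_len n k) (\<lambda>xs. prod_list (map \<mu> xs))) M N"
      by (simp add: Suc.IH)
    also have "\<dots> = (\<Sum>j\<in>{..<n}. \<mu> j * wedge (TT (\<rho> j)) (SF \<rho> (lists_len n k) (\<lambda>xs. prod_list (map \<mu> xs))) M N)"
      unfolding LF_def by (rule wedge_sum_left)
    also have "\<dots> = (\<Sum>j\<in>{..<n}. \<Sum>xs\<in>lists_len n k. \<mu> j * prod_list (map \<mu> xs) * TT (gam \<rho> (j # xs)) M N)"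
      unfolding SF_def wedge_sum_right wedge_TT gam_Cons
      by (simp add: sum_distrib_left algebra_simps)
    also have "\<dots> = (\<Sum>xs\<in>lists_len n k. \<Sum>j\<in>{..<n}. \<mu> j * prod_list (map \<mu> xs) * TT (gam \<rho> (j # xs)) M N)"
      by (rule sum.swap)
    also have "\<dots> = (\<Sum>p\<in>lists_len n k \<times> {..<n}. (\<lambda>ys. prod_list (map \<mu> ys) * TT (gam \<rho> ys) M N) ((\<lambda>(xs, j). j # xs) p))"
      by (simp add: sum.cartesian_product split_def)
    also have "\<dots> = (\<Sum>ys\<in>lists_len n (Suc k). prod_list (map \<mu> ys) * TT (gam \<rho> ys) M N)"
      unfolding lists_len_Suc
      by (rule sum.reindex[symmetric, unfolded comp_def]) (auto simp: inj_on_def)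
    also have "\<dots> = SF \<rho> (lists_len n (Suc k)) (\<lambda>xs. prod_list (map \<mu> xs)) M N"
      by (simp add: SF_def)
    finally show "form_pow (LF \<rho> n \<mu>) (Suc k) M N = SF \<rho> (lists_len n (Suc k)) (\<lambda>xs. prod_list (map \<mu> xs)) M N" .
  qed
qed

lemma form_cnj_SF: "form_cnj (SF \<rho> X c) = SF \<rho> X (\<lambda>x. cnj (c x))"
  by (simp add: form_cnj_def SF_def TT_def cnj_sum mult.commute mult.left_commute)

lemma form_add_SF: "form_add (SF \<rho> X a) (SF \<rho> X b) = SF \<rho> X (\<lambda>x. a x + b x)"
  by (simp add: form_add_def SF_def sum.distrib[symmetric] algebra_simps)

lemma form_diff_SF: "form_diff (SF \<rho> X a) (SF \<rho> X b) = SF \<rho> X (\<lambda>x. a x - b x)"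
  by (simp add: form_diff_def SF_def sum_subtractf[symmetric] algebra_simps)

lemma form_scale_SF: "form_scale d (SF \<rho> X a) = SF \<rho> X (\<lambda>x. d * a x)"
  by (simp add: form_scale_def SF_def sum_distrib_left algebra_simps)

lemma form_Re_SF: "form_Re (SF \<rho> X c) = SF \<rho> X (\<lambda>x. of_real (Re (c x)))"
  unfolding form_Re_def form_cnj_SF form_add_SF form_scale_SF
  by (simp add: complex_add_cnj)

lemma aux_ii: "- (\<i> * (complex_of_real r * \<i>)) = complex_of_real r"
  by (simp add: complex_eq_iff)

lemma form_Im_SF: "form_Im (SF \<rho> X c) = SF \<rho> X (\<lambda>x. of_real (Im (c x)))"
  unfolding form_Im_def form_cnj_SF form_diff_SF form_scale_SF
  by (simp add: complex_diff_cnj aux_ii)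

lemma form_add_LF: "form_add (LF \<rho> n a) (LF \<rho> n b) = LF \<rho> n (\<lambda>x. a x + b x)"
  by (simp add: form_add_def LF_def sum.distrib[symmetric] algebra_simps)

lemma form_scale_LF: "form_scale d (LF \<rho> n a) = LF \<rho> n (\<lambda>x. d * a x)"
  by (simp add: form_scale_def LF_def sum_distrib_left algebra_simps)

lemma G_form_LF:
  "G_form \<theta> k (LF \<rho> n \<mu>) (LF \<rho> n \<nu>) = SF \<rho> (lists_len n k)
     (\<lambda>xs. of_real (Re (prod_list (map (\<lambda>j. \<mu> j + \<i> * \<nu> j) xs))
               - cot \<theta> * Im (prod_list (map (\<lambda>j. \<mu> j + \<i> * \<nu> j) xs))))"
  unfolding G_form_def Let_def form_scale_LF form_add_LF form_pow_LF form_Re_SF form_Im_SF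
    form_scale_SF form_diff_SF
  by simp

lemma wedge1_zero_left: "wedge1 (\<lambda>_. 0) b = (\<lambda>_. 0)"
  by (simp add: wedge1_def fun_eq_iff)

lemma pos_form_SF:
  assumes "finite X" "\<And>j. oneform (\<rho> j)"
    and "\<And>xs. xs \<in> X \<Longrightarrow> distinct xs \<Longrightarrow> Im (d xs) = 0 \<and> 0 \<le> Re (d xs)"
  shows "pos_form n k (SF \<rho> X d)"
  unfolding pos_form_def Let_def
proof (intro allI impI)
  fix as :: "(nat \<Rightarrow> complex) list"
  define \<beta> where "\<beta> = foldr (\<lambda>a acc. wedge1 (rho n a) acc) as h0"
  have eq: "wedge (SF \<rho> X d) (foldr (\<lambda>a acc. wedge (form11 n (\<lambda>i j. a i * cnj (a j))) acc) as form_one) {..<n} {..<n}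
     = (\<Sum>xs\<in>X. d xs * (wedge1 (gam \<rho> xs) \<beta> {..<n} * cnj (wedge1 (gam \<rho> xs) \<beta> {..<n})))"
    unfolding foldr_TT SF_def wedge_sum_left wedge_TT \<beta>_def by (simp add: TT_def)
  have trm: "Im (d xs * (wedge1 (gam \<rho> xs) \<beta> {..<n} * cnj (wedge1 (gam \<rho> xs) \<beta> {..<n}))) = 0 \<and>
     0 \<le> Re (d xs * (wedge1 (gam \<rho> xs) \<beta> {..<n} * cnj (wedge1 (gam \<rho> xs) \<beta> {..<n})))"
    if "xs \<in> X" for xs
  proof (cases "distinct xs")
    case True
    then have "Im (d xs) = 0" "0 \<le> Re (d xs)" using assms(3) that by auto
    then show ?thesis by (simp add: complex_mult_cnj)
  next
    case False
    then show ?thesis using gam_nondistinct[OF assms(2) False] by (simp add: wedge1_zero_left)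
  qed
  show "Im (wedge (SF \<rho> X d) (foldr (\<lambda>a acc. wedge (form11 n (\<lambda>i j. a i * cnj (a j))) acc) as form_one) {..<n} {..<n}) = 0 \<and>
        0 \<le> Re (wedge (SF \<rho> X d) (foldr (\<lambda>a acc. wedge (form11 n (\<lambda>i j. a i * cnj (a j))) acc) as form_one) {..<n} {..<n})"
    unfolding eq Im_sum Re_sum
  proof
    show "(\<Sum>x\<in>X. Im (d x * (wedge1 (gam \<rho> x) \<beta> {..<n} * cnj (wedge1 (gam \<rho> x) \<beta> {..<n})))) = 0"
      by (rule sum.neutral) (use trm in blast)
    show "0 \<le> (\<Sum>x\<in>X. Re (d x * (wedge1 (gam \<rho> x) \<beta> {..<n} * cnj (wedge1 (gam \<rho> x) \<beta> {..<n}))))"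
      by (rule sum_nonneg) (use trm in blast)
  qed
qed

lemma mult_entry:
  assumes "A \<in> carrier_mat n n" "B \<in> carrier_mat n n" "i < n" "j < n"
  shows "(A * B) $$ (i, j) = (\<Sum>k<n. A $$ (i, k) * B $$ (k, j))"
  using assms by (simp add: index_mult_mat scalar_prod_def atLeast0LessThan)

declare index_mult_mat(1)[simp del]

lemma diag_exists:
  assumes "gen_eigenvalues n chi omega lam"
  shows "\<exists>R. \<forall>a<n. \<forall>b<n. chi a b = (\<Sum>j<n. R a j * cnj (R b j)) \<and>
            omega a b = (\<Sum>j<n. complex_of_real (lam j) * R a j * cnj (R b j))"
proof -
  obtain P where h1: "\<forall>i<n. \<forall>j<n. (\<Sum>a<n. \<Sum>b<n. P a i * chi a b * cnj (P b j)) = (if i = j then 1 else 0)"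
    and h2: "\<forall>i<n. \<forall>j<n. (\<Sum>a<n. \<Sum>b<n. P a i * omega a b * cnj (P b j)) = (if i = j then of_real (lam i) else 0)"
    using assms unfolding gen_eigenvalues_def by blast
  define Am where "Am = mat n n (\<lambda>(i, a). P a i)"
  define Xm where "Xm = mat n n (\<lambda>(a, b). chi a b)"
  define Wm where "Wm = mat n n (\<lambda>(a, b). omega a b)"
  define Bm where "Bm = mat n n (\<lambda>(b, j). cnj (P b j))"
  define Dm where "Dm = mat n n (\<lambda>(i, j). if i = j then complex_of_real (lam i) else 0)"
  have c: "Am \<in> carrier_mat n n" "Xm \<in> carrier_mat n n" "Wm \<in> carrier_mat n n" "Bm \<in> carrier_mat n n"
     "Dm \<in> carrier_mat n n"
    by (simp_all add: Am_def Xm_def Wm_def Bm_def Dm_def)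
  have trip: "(Am * Y * Bm) $$ (i, j) = (\<Sum>a<n. \<Sum>b<n. P a i * Y $$ (a, b) * cnj (P b j))"
    if "Y \<in> carrier_mat n n" "i < n" "j < n" for Y i j
  proof -
    have "(Am * Y * Bm) $$ (i, j) = (\<Sum>b<n. (Am * Y) $$ (i, b) * Bm $$ (b, j))"
      using that c by (intro mult_entry) auto
    also have "\<dots> = (\<Sum>b<n. (\<Sum>a<n. Am $$ (i, a) * Y $$ (a, b)) * Bm $$ (b, j))"
      using that c by (intro sum.cong refl) (simp add: mult_entry del: index_mult_mat)
    also have "\<dots> = (\<Sum>b<n. (\<Sum>a<n. P a i * Y $$ (a, b)) * cnj (P b j))"
      using that by (intro sum.cong refl) (simp add: Am_def Bm_def)
    also have "\<dots> = (\<Sum>b<n. \<Sum>a<n. P a i * Y $$ (a, b) * cnj (P b j))"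
      by (simp add: sum_distrib_right)
    also have "\<dots> = (\<Sum>a<n. \<Sum>b<n. P a i * Y $$ (a, b) * cnj (P b j))"
      by (rule sum.swap)
    finally show ?thesis .
  qed
  have Xe: "Xm $$ (a, b) = chi a b" "Wm $$ (a, b) = omega a b" if "a < n" "b < n" for a b
    using that by (simp_all add: Xm_def Wm_def)
  have E1: "Am * Xm * Bm = 1\<^sub>m n"
  proof (rule eq_matI)
    fix i j assume "i < dim_row (1\<^sub>m n)" "j < dim_col (1\<^sub>m n)"
    then have ij: "i < n" "j < n" by simp_all
    have "(Am * Xm * Bm) $$ (i, j) = (\<Sum>a<n. \<Sum>b<n. P a i * Xm $$ (a, b) * cnj (P b j))"
      by (rule trip[OF c(2) ij])
    also have "\<dots> = (\<Sum>a<n. \<Sum>b<n. P a i * chi a b * cnj (P b j))" by (simp add: Xe)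
    also have "\<dots> = 1\<^sub>m n $$ (i, j)" using h1 ij by simp
    finally show "(Am * Xm * Bm) $$ (i, j) = 1\<^sub>m n $$ (i, j)" .
  qed (use c in auto)
  have E2: "Am * Wm * Bm = Dm"
  proof (rule eq_matI)
    fix i j assume "i < dim_row Dm" "j < dim_col Dm"
    then have ij: "i < n" "j < n" by (simp_all add: Dm_def)
    have "(Am * Wm * Bm) $$ (i, j) = (\<Sum>a<n. \<Sum>b<n. P a i * Wm $$ (a, b) * cnj (P b j))"
      by (rule trip[OF c(3) ij])
    also have "\<dots> = (\<Sum>a<n. \<Sum>b<n. P a i * omega a b * cnj (P b j))" by (simp add: Xe)
    also have "\<dots> = Dm $$ (i, j)" using h2 ij by (simp add: Dm_def)
    finally show "(Am * Wm * Bm) $$ (i, j) = Dm $$ (i, j)" .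
  qed (use c in auto)
  define Rm where "Rm = Xm * Bm"
  have cR: "Rm \<in> carrier_mat n n" using c by (simp add: Rm_def)
  have "Am * Rm = 1\<^sub>m n" using E1 c by (simp add: Rm_def assoc_mult_mat)
  then have RA: "Rm * Am = 1\<^sub>m n" using mat_mult_left_right_inverse[OF c(1) cR] by blast
  define Rs where "Rs = mat n n (\<lambda>(i, j). cnj (Rm $$ (j, i)))"
  have cRs: "Rs \<in> carrier_mat n n" by (simp add: Rs_def)
  have BR: "Bm * Rs = 1\<^sub>m n"
  proof (rule eq_matI)
    fix i j assume ij: "i < dim_row (1\<^sub>m n)" "j < dim_col (1\<^sub>m n)"
    have "(Bm * Rs) $$ (i, j) = (\<Sum>k<n. Bm $$ (i, k) * Rs $$ (k, j))"
      using ij c cRs by (intro mult_entry) auto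
    also have "\<dots> = (\<Sum>k<n. cnj (P i k) * cnj (Rm $$ (j, k)))"
      using ij by (simp add: Bm_def Rs_def)
    also have "\<dots> = cnj (\<Sum>k<n. Rm $$ (j, k) * Am $$ (k, i))"
      using ij by (simp add: cnj_sum Am_def mult.commute)
    also have "\<dots> = cnj ((Rm * Am) $$ (j, i))"
      using ij cR c by (simp add: mult_entry)
    also have "\<dots> = 1\<^sub>m n $$ (i, j)" using ij by (simp add: RA)
    finally show "(Bm * Rs) $$ (i, j) = 1\<^sub>m n $$ (i, j)" .
  qed (simp_all add: Bm_def Rs_def)
  have sand: "Rm * (Am * Y * Bm) * Rs = Y" if "Y \<in> carrier_mat n n" for Y
  proof -
    have "Rm * (Am * Y * Bm) * Rs = (Rm * Am) * Y * (Bm * Rs)"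
      using that c cR cRs by (simp add: assoc_mult_mat[of _ n n _ n _ n])
    also have "\<dots> = Y" using that by (simp add: RA BR)
    finally show ?thesis .
  qed
  have X: "Xm = Rm * Rs" using sand[OF c(2)] E1 cR by simp
  have W: "Wm = Rm * Dm * Rs" using sand[OF c(3)] E2 by simp
  show ?thesis
  proof (intro exI allI impI conjI)
    fix a b assume ab: "a < n" "b < n"
    have "chi a b = Xm $$ (a, b)" using ab by (simp add: Xm_def)
    also have "\<dots> = (\<Sum>j<n. Rm $$ (a, j) * Rs $$ (j, b))"
      unfolding X using ab cR cRs by (intro mult_entry) auto
    also have "\<dots> = (\<Sum>j<n. Rm $$ (a, j) * cnj (Rm $$ (b, j)))"
      using ab by (simp add: Rs_def)
    finally show "chi a b = (\<Sum>j<n. (\<lambda>a j. Rm $$ (a, j)) a j * cnj ((\<lambda>a j. Rm $$ (a, j)) b j))" by simp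
    have "omega a b = Wm $$ (a, b)" using ab by (simp add: Wm_def)
    also have "\<dots> = (\<Sum>j<n. (Rm * Dm) $$ (a, j) * Rs $$ (j, b))"
      unfolding W using ab cR cRs c by (intro mult_entry) auto
    also have "\<dots> = (\<Sum>j<n. (\<Sum>k<n. Rm $$ (a, k) * Dm $$ (k, j)) * cnj (Rm $$ (b, j)))"
      using ab cR c by (intro sum.cong refl) (simp add: mult_entry Rs_def)
    also have "\<dots> = (\<Sum>j<n. complex_of_real (lam j) * Rm $$ (a, j) * cnj (Rm $$ (b, j)))"
    proof (rule sum.cong[OF refl])
      fix j assume j: "j \<in> {..<n}"
      have "(\<Sum>k<n. Rm $$ (a, k) * Dm $$ (k, j)) = (\<Sum>k<n. if k = j then Rm $$ (a, k) * complex_of_real (lam j) else 0)"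
        using j by (intro sum.cong refl) (auto simp: Dm_def)
      also have "\<dots> = Rm $$ (a, j) * complex_of_real (lam j)" using j by (simp add: sum.delta)
      finally show "(\<Sum>k<n. Rm $$ (a, k) * Dm $$ (k, j)) * cnj (Rm $$ (b, j)) = complex_of_real (lam j) * Rm $$ (a, j) * cnj (Rm $$ (b, j))"
        by simp
    qed
    finally show "omega a b = (\<Sum>j<n. complex_of_real (lam j) * (\<lambda>a j. Rm $$ (a, j)) a j * cnj ((\<lambda>a j. Rm $$ (a, j)) b j))" by simp
  qed
qed

lemma cot_arccot: "cot (arccot x) = x"
proof -
  have "cot (pi / 2 - y) = tan y" for y :: real
    by (simp add: cot_def tan_def cos_diff sin_diff)
  then show ?thesis unfolding arccot_def by (simp add: tan_arctan)
qed

lemma arccot_pos: "0 < arccot x" and arccot_less_pi: "arccot x < pi"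
  unfolding arccot_def using arctan_bounded[of x] by auto

lemma sin_arccot_pos: "0 < sin (arccot x)"
  using arccot_pos arccot_less_pi sin_gt_zero by blast

lemma cot_plus_i: "0 < sin a \<Longrightarrow> complex_of_real (cot a) + \<i> = cis a / complex_of_real (sin a)"
  by (simp add: complex_eq_iff cot_def)

lemma prod_cis: "finite S \<Longrightarrow> (\<Prod>j\<in>S. cis (a j)) = cis (\<Sum>j\<in>S. a j)"
  by (induction S rule: finite_induct) (simp_all add: cis_mult)

lemma prod_cot_i:
  assumes "finite S" "\<And>j. j \<in> S \<Longrightarrow> 0 < sin (a j)"
  shows "(\<Prod>j\<in>S. complex_of_real (cot (a j)) + \<i>) = cis (\<Sum>j\<in>S. a j) / complex_of_real (\<Prod>j\<in>S. sin (a j))"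
proof -
  have "(\<Prod>j\<in>S. complex_of_real (cot (a j)) + \<i>) = (\<Prod>j\<in>S. cis (a j) / complex_of_real (sin (a j)))"
    using assms(2) by (intro prod.cong refl) (simp add: cot_plus_i)
  also have "\<dots> = cis (\<Sum>j\<in>S. a j) / complex_of_real (\<Prod>j\<in>S. sin (a j))"
    by (simp add: prod_dividef prod_cis assms(1))
  finally show ?thesis .
qed

lemma coeff_G:
  assumes "finite S" "0 < \<theta>" "\<theta> < pi"
  shows "Re (\<Prod>j\<in>S. complex_of_real (lam j) + \<i>) - cot \<theta> * Im (\<Prod>j\<in>S. complex_of_real (lam j) + \<i>)
    = sin (\<theta> - (\<Sum>j\<in>S. arccot (lam j))) / (sin \<theta> * (\<Prod>j\<in>S. sin (arccot (lam j))))"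
proof -
  let ?A = "\<Sum>j\<in>S. arccot (lam j)" and ?P = "\<Prod>j\<in>S. sin (arccot (lam j))"
  have s: "0 < sin \<theta>" using assms sin_gt_zero by blast
  have P: "0 < ?P" by (rule prod_pos) (simp add: sin_arccot_pos)
  have "(\<Prod>j\<in>S. complex_of_real (lam j) + \<i>) = (\<Prod>j\<in>S. complex_of_real (cot (arccot (lam j))) + \<i>)"
    by (simp add: cot_arccot)
  also have "\<dots> = cis ?A / complex_of_real ?P"
    by (rule prod_cot_i[OF assms(1)]) (simp add: sin_arccot_pos)
  finally have p: "(\<Prod>j\<in>S. complex_of_real (lam j) + \<i>) = cis ?A / complex_of_real ?P" .
  have "Re (cis ?A / complex_of_real ?P) - cot \<theta> * Im (cis ?A / complex_of_real ?P)
      = (cos ?A - cos \<theta> / sin \<theta> * sin ?A) / ?P"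
    by (simp add: cot_def diff_divide_distrib del: of_real_prod)
  also have "\<dots> = (sin \<theta> * cos ?A - cos \<theta> * sin ?A) / (sin \<theta> * ?P)"
    using s P by (simp add: field_simps)
  also have "\<dots> = sin (\<theta> - ?A) / (sin \<theta> * ?P)" by (simp add: sin_diff)
  finally show ?thesis unfolding p .
qed

lemma cot_diff_sin: "0 < sin (a::real) \<Longrightarrow> 0 < sin t \<Longrightarrow> cot a - cot t = sin (t - a) / (sin a * sin t)"
proof -
  assume a: "0 < sin a" "0 < sin t"
  have "sin (t - a) / (sin a * sin t) = (sin t * cos a - cos t * sin a) / (sin a * sin t)"
    by (simp add: sin_diff)
  also have "\<dots> = cos a / sin a - cos t / sin t"
  proof -
    have n1: "sin a \<noteq> 0" using a(1) by linarith
    have n2: "sin t \<noteq> 0" using a(2) by linarith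
    note n = n1 n2
    show ?thesis using n by (simp add: divide_simps algebra_simps)
  qed
  finally show ?thesis by (simp add: cot_def)
qed

lemma sin_ge_min:
  assumes "0 < d" "d \<le> t" "t \<le> th" "th < pi"
  shows "min (sin d) (sin th) \<le> sin t"
proof (cases "t \<le> pi/2")
  case True
  then have "sin d \<le> sin t" using assms by (intro sin_monotone_2pi_le) auto
  then show ?thesis by simp
next
  case False
  have "sin (pi - th) \<le> sin (pi - t)" using assms False by (intro sin_monotone_2pi_le) auto
  then show ?thesis by simp
qed

lemma b_bound:
  assumes "0 < a" "a < th" "th < pi"
  shows "sin th ^ 2 \<le> sin (th - a) + sin a * sin th"
proof -
  have s1: "0 < sin (th - a)" using assms by (intro sin_gt_zero) auto
  have s2: "0 < sin a" using assms by (intro sin_gt_zero) auto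
  have s3: "0 < sin th" using assms by (intro sin_gt_zero) auto
  have "sin th = sin (th - a) * cos a + cos (th - a) * sin a"
    using sin_add[of "th - a" a] by simp
  also have "\<dots> \<le> sin (th - a) * 1 + 1 * sin a"
    using s1 s2 by (intro add_mono mult_left_mono mult_right_mono) auto
  finally have k: "sin th \<le> sin (th - a) + sin a" by simp
  have "sin th ^ 2 \<le> sin th * (sin (th - a) + sin a)"
    unfolding power2_eq_square using k s3 by (intro mult_left_mono) auto
  also have "\<dots> = sin th * sin (th - a) + sin a * sin th" by (simp add: algebra_simps)
  also have "\<dots> \<le> 1 * sin (th - a) + sin a * sin th"
    using s1 s3 sin_le_one[of th] by (intro add_mono mult_right_mono) auto
  finally show ?thesis by simp
qed

lemma scalar_a:
  assumes "finite S" "0 < th" "th < pi" "\<And>j. j \<in> S \<Longrightarrow> 0 < a j \<and> a j < th"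
  shows "sin (th - (\<Sum>j\<in>S. a j)) / (sin th * (\<Prod>j\<in>S. sin (a j)))
     \<le> (1 / sin th ^ (2 * card S + 1)) * (\<Prod>j\<in>S. cot (a j) - cot th + 1)"
proof -
  define s where "s = sin th"
  define m where "m = card S"
  define P where "P = (\<Prod>j\<in>S. sin (a j))"
  define B where "B = (\<Prod>j\<in>S. sin (th - a j) + sin (a j) * s)"
  have s: "0 < s" "s \<le> 1" using assms unfolding s_def by (auto intro: sin_gt_zero)
  have sa: "0 < sin (a j)" if "j \<in> S" for j using assms(3) assms(4)[OF that] by (intro sin_gt_zero) auto
  have P: "0 < P" unfolding P_def by (rule prod_pos) (use sa in auto)
  have sm: "0 < s ^ m" "s ^ m \<le> 1" using s by (auto intro: power_le_one)
  have "(\<Prod>j\<in>S. cot (a j) - cot th + 1) = (\<Prod>j\<in>S. (sin (th - a j) + sin (a j) * s) / (sin (a j) * s))"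
  proof (rule prod.cong[OF refl])
    fix j assume j: "j \<in> S"
    have "cot (a j) - cot th = sin (th - a j) / (sin (a j) * s)"
      unfolding s_def by (rule cot_diff_sin) (use sa[OF j] s in \<open>auto simp: s_def\<close>)
    then show "cot (a j) - cot th + 1 = (sin (th - a j) + sin (a j) * s) / (sin (a j) * s)"
      using sa[OF j] s by (simp add: field_simps)
  qed
  also have "\<dots> = B / (P * s ^ m)"
    by (simp add: prod_dividef prod.distrib B_def P_def m_def)
  finally have eq: "(\<Prod>j\<in>S. cot (a j) - cot th + 1) = B / (P * s ^ m)" .
  have "s ^ (2 * m) = (\<Prod>j\<in>S. s ^ 2)" by (simp add: m_def power_mult)
  also have "\<dots> \<le> B" unfolding B_def
    by (rule prod_mono) (use assms(3,4) in \<open>auto simp: s_def intro!: b_bound\<close>)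
  finally have Bb: "s ^ (2 * m) \<le> B" .
  have "sin (th - (\<Sum>j\<in>S. a j)) / (s * P) \<le> 1 / (s * P)"
    using s P by (intro divide_right_mono) auto
  also have "\<dots> \<le> 1 / (s * P * s ^ m)"
    using s P sm by (intro divide_left_mono) (auto intro: mult_pos_pos)
  also have "\<dots> = s ^ (2 * m) / (s ^ (2 * m + 1) * (P * s ^ m))"
    using s P by (simp add: field_simps power_add)
  also have "\<dots> \<le> B / (s ^ (2 * m + 1) * (P * s ^ m))"
    using s P Bb by (intro divide_right_mono) auto
  also have "\<dots> = (1 / s ^ (2 * m + 1)) * (B / (P * s ^ m))" by simp
  finally show ?thesis unfolding eq s_def P_def m_def by simp
qed

lemma scalar_b:
  assumes "finite S" "S \<noteq> {}" "card S \<le> n" "\<And>j. j \<in> S \<Longrightarrow> 0 < a j"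
    "(\<Sum>j\<in>S. a j) < th - d" "0 < d" "d < th" "th < pi"
  shows "(min (sin d) (sin th) * sin th ^ n) * (\<Prod>j\<in>S. cot (a j) - cot th)
     \<le> sin (th - (\<Sum>j\<in>S. a j)) / (sin th * (\<Prod>j\<in>S. sin (a j)))"
proof -
  define s where "s = sin th"
  define m where "m = card S"
  define A where "A = (\<Sum>j\<in>S. a j)"
  define P where "P = (\<Prod>j\<in>S. sin (a j))"
  define Q where "Q = (\<Prod>j\<in>S. sin (th - a j))"
  define mn where "mn = min (sin d) s"
  have s: "0 < s" "s \<le> 1" using assms unfolding s_def by (auto intro: sin_gt_zero)
  have aA: "a j \<le> A" if "j \<in> S" for j
    unfolding A_def using assms(1,4) that by (intro member_le_sum) (auto simp: less_imp_le)
  have sa: "0 < sin (a j)" if "j \<in> S" for j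
    using assms(4)[OF that] aA[OF that] assms(5-8) unfolding A_def[symmetric] by (intro sin_gt_zero) auto
  have P: "0 < P" unfolding P_def by (rule prod_pos) (use sa in auto)
  have m1: "1 \<le> m" using assms(1,2) unfolding m_def by (simp add: Suc_le_eq card_gt_0_iff)
  have Apos: "0 < A" unfolding A_def using assms(1,2,4) by (intro sum_pos) auto
  have sd: "0 < sin d" using assms(6-8) by (intro sin_gt_zero) auto
  have mn: "0 < mn" "mn \<le> sin (th - A)"
    unfolding mn_def using sd s apply simp
    unfolding s_def using assms(6-8) Apos assms(5) unfolding A_def[symmetric]
    by (intro sin_ge_min) auto
  have Q: "Q \<le> 1"
  proof -
    have "\<bar>Q\<bar> = (\<Prod>j\<in>S. \<bar>sin (th - a j)\<bar>)" by (simp add: Q_def abs_prod)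
    also have "\<dots> \<le> (\<Prod>j\<in>S. 1)" by (intro prod_mono) auto
    finally show ?thesis by simp
  qed
  have "(\<Prod>j\<in>S. cot (a j) - cot th) = (\<Prod>j\<in>S. sin (th - a j) / (sin (a j) * s))"
  proof (rule prod.cong[OF refl])
    fix j assume j: "j \<in> S"
    show "cot (a j) - cot th = sin (th - a j) / (sin (a j) * s)"
      unfolding s_def by (rule cot_diff_sin) (use sa[OF j] s in \<open>auto simp: s_def\<close>)
  qed
  also have "\<dots> = Q / (P * s ^ m)"
    by (simp add: prod_dividef prod.distrib Q_def P_def m_def)
  finally have eq: "(\<Prod>j\<in>S. cot (a j) - cot th) = Q / (P * s ^ m)" .
  have sn: "s ^ n \<le> s ^ (m - 1)"
    using s assms(3) m1 unfolding m_def by (intro power_decreasing) auto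
  have "(mn * s ^ n) * Q \<le> mn * s ^ n"
    using Q mn s by (simp add: mult_left_le)
  also have "\<dots> \<le> sin (th - A) * s ^ (m - 1)"
    using mn s sn by (intro mult_mono) auto
  finally have k: "(mn * s ^ n) * Q \<le> sin (th - A) * s ^ (m - 1)" .
  have sm: "s ^ m = s * s ^ (m - 1)" using m1 by (cases m) auto
  have "(mn * s ^ n) * (Q / (P * s ^ m)) = ((mn * s ^ n) * Q) / (P * s ^ m)" by simp
  also have "\<dots> \<le> (sin (th - A) * s ^ (m - 1)) / (P * s ^ m)"
    using k P s by (intro divide_right_mono) auto
  also have "\<dots> = sin (th - A) / (s * P)"
    using P s unfolding sm by (simp add: field_simps)
  finally show ?thesis unfolding eq mn_def s_def A_def P_def .
qed

lemma form11_LF: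
  assumes "\<forall>a<n. \<forall>b<n. A a b = (\<Sum>j<n. \<mu> j * R a j * cnj (R b j))"
  shows "form11 n A = LF (\<lambda>j. rho n (\<lambda>a. R a j)) n \<mu>"
proof (intro ext)
  fix I J
  show "form11 n A I J = LF (\<lambda>j. rho n (\<lambda>a. R a j)) n \<mu> I J"
  proof (cases "card I = 1 \<and> card J = 1 \<and> I \<subseteq> {..<n} \<and> J \<subseteq> {..<n}")
    case True
    then obtain a b where ab: "I = {a}" "J = {b}" by (auto simp: card_1_singleton_iff)
    with True have "a < n" "b < n" by auto
    then show ?thesis using True assms ab
      by (simp add: form11_def LF_def TT_def rho_def mult.assoc)
  next
    case False
    then have "\<not> (card I = 1 \<and> I \<subseteq> {..<n}) \<or> \<not> (card J = 1 \<and> J \<subseteq> {..<n})" by auto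
    then show ?thesis
    proof
      assume h: "\<not> (card I = 1 \<and> I \<subseteq> {..<n})"
      have r: "rho n r I = 0" for r using h unfolding rho_def by auto
      have f: "form11 n A I J = 0" using h unfolding form11_def by auto
      show ?thesis by (simp add: LF_def TT_def r f)
    next
      assume h: "\<not> (card J = 1 \<and> J \<subseteq> {..<n})"
      have r: "rho n r J = 0" for r using h unfolding rho_def by auto
      have f: "form11 n A I J = 0" using h unfolding form11_def by auto
      show ?thesis by (simp add: LF_def TT_def r f)
    qed
  qed
qed

lemma oneform_rho_fam: "oneform (rho n (\<lambda>a. R a j))"
  by (rule oneform_rho)

lemma dist_prod: "distinct xs \<Longrightarrow> prod_list (map f xs) = prod f (set xs)"
  by (simp add: prod.distinct_set_conv_list)

lemma arccot_lt_theta: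
  assumes "2 \<le> n" "j < n"
    and G: "\<forall>I \<subseteq> {..<n}. card I = n - 1 \<longrightarrow> (\<Sum>i\<in>I. arccot (lam i)) < th"
  shows "arccot (lam j) < th"
proof -
  define j' where "j' = (if j = 0 then 1 else 0::nat)"
  have j': "j' < n" "j' \<noteq> j" using assms unfolding j'_def by auto
  define I where "I = {..<n} - {j'}"
  have "card I = n - 1" using j' unfolding I_def by simp
  then have "(\<Sum>i\<in>I. arccot (lam i)) < th" using G unfolding I_def by auto
  moreover have "arccot (lam j) \<le> (\<Sum>i\<in>I. arccot (lam i))"
    using j' assms(2) unfolding I_def by (intro member_le_sum) (auto intro: less_imp_le arccot_pos)
  ultimately show ?thesis by simp
qed

lemma decomp:
  assumes "gen_eigenvalues n chi omega lam"
  obtains R where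
    "form11 n chi = LF (\<lambda>j. rho n (\<lambda>a. R a j)) n (\<lambda>j. 1)"
    "form11 n omega = LF (\<lambda>j. rho n (\<lambda>a. R a j)) n (\<lambda>j. of_real (lam j))"
    "\<And>c. form11 n (\<lambda>i j. omega i j - of_real c * chi i j + chi i j)
        = LF (\<lambda>j. rho n (\<lambda>a. R a j)) n (\<lambda>j. of_real (lam j) - of_real c + 1)"
    "\<And>c. form11 n (\<lambda>i j. omega i j - of_real c * chi i j)
        = LF (\<lambda>j. rho n (\<lambda>a. R a j)) n (\<lambda>j. of_real (lam j) - of_real c)"
proof -
  obtain R where R: "\<forall>a<n. \<forall>b<n. chi a b = (\<Sum>j<n. R a j * cnj (R b j)) \<and>
            omega a b = (\<Sum>j<n. complex_of_real (lam j) * R a j * cnj (R b j))"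
    using diag_exists[OF assms] by blast
  show ?thesis
  proof (rule that)
    show "form11 n chi = LF (\<lambda>j. rho n (\<lambda>a. R a j)) n (\<lambda>j. 1)"
      by (rule form11_LF) (simp add: R)
    show "form11 n omega = LF (\<lambda>j. rho n (\<lambda>a. R a j)) n (\<lambda>j. of_real (lam j))"
      by (rule form11_LF) (simp add: R)
    show "form11 n (\<lambda>i j. omega i j - of_real c * chi i j + chi i j)
        = LF (\<lambda>j. rho n (\<lambda>a. R a j)) n (\<lambda>j. of_real (lam j) - of_real c + 1)" for c
      by (rule form11_LF) (simp add: R sum_distrib_left sum.distrib[symmetric] sum_subtractf[symmetric] algebra_simps)
    show "form11 n (\<lambda>i j. omega i j - of_real c * chi i j)
        = LF (\<lambda>j. rho n (\<lambda>a. R a j)) n (\<lambda>j. of_real (lam j) - of_real c)" for c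
      by (rule form11_LF) (simp add: R sum_distrib_left sum_subtractf[symmetric] algebra_simps)
  qed
qed

lemma coeff_a:
  assumes th: "0 < th" "th < pi" and S: "S \<subseteq> {..<n}" "card S = n"
    and G: "\<forall>I \<subseteq> {..<n}. card I = n - 1 \<longrightarrow> (\<Sum>i\<in>I. arccot (lam i)) < th"
  shows "Re (\<Prod>j\<in>S. complex_of_real (lam j) + \<i>) - cot th * Im (\<Prod>j\<in>S. complex_of_real (lam j) + \<i>)
     \<le> (if n \<le> 1 then 1 else 1 / sin th ^ (2 * n + 1)) * (\<Prod>j\<in>S. lam j - cot th + 1)"
proof -
  have fin: "finite S" using S(1) finite_subset by blast
  show ?thesis
  proof (cases "n \<le> 1")
    case True
    then have "card S = 0 \<or> card S = 1" using S by auto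
    then show ?thesis
    proof
      assume "card S = 0"
      then have "S = {}" using fin by simp
      then show ?thesis using True by simp
    next
      assume "card S = 1"
      then obtain j where "S = {j}" by (auto simp: card_1_singleton_iff)
      then show ?thesis using True by simp
    qed
  next
    case False
    define a where "a j = arccot (lam j)" for j
    have lt: "0 < a j \<and> a j < th" if "j \<in> S" for j
      unfolding a_def using arccot_pos arccot_lt_theta[of n j lam th] False G that S(1) by auto
    have "Re (\<Prod>j\<in>S. complex_of_real (lam j) + \<i>) - cot th * Im (\<Prod>j\<in>S. complex_of_real (lam j) + \<i>)
       = sin (th - (\<Sum>j\<in>S. a j)) / (sin th * (\<Prod>j\<in>S. sin (a j)))"
      unfolding a_def by (rule coeff_G[OF fin th])
    also have "\<dots> \<le> (1 / sin th ^ (2 * card S + 1)) * (\<Prod>j\<in>S. cot (a j) - cot th + 1)"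
      by (rule scalar_a[OF fin th]) (use lt in auto)
    also have "\<dots> = (if n \<le> 1 then 1 else 1 / sin th ^ (2 * n + 1)) * (\<Prod>j\<in>S. lam j - cot th + 1)"
      using False S(2) by (simp add: a_def cot_arccot)
    finally show ?thesis .
  qed
qed

lemma coeff_b:
  assumes th: "0 < d" "d < th" "th < pi" and S: "S \<subseteq> {..<n}" "card S = k" "1 \<le> k" "k \<le> n - 1"
    and G: "\<forall>I \<subseteq> {..<n}. card I = n - 1 \<longrightarrow> (\<Sum>i\<in>I. arccot (lam i)) < th - d"
  shows "(min (sin d) (sin th) * sin th ^ n) * (\<Prod>j\<in>S. lam j - cot th)
     \<le> Re (\<Prod>j\<in>S. complex_of_real (lam j) + \<i>) - cot th * Im (\<Prod>j\<in>S. complex_of_real (lam j) + \<i>)"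
proof -
  have fin: "finite S" using S(1) finite_subset by blast
  define a where "a j = arccot (lam j)" for j
  obtain I where I: "S \<subseteq> I" "I \<subseteq> {..<n}" "card I = n - 1"
    using exists_subset_between[of S "n - 1" "{..<n}"] S by auto
  have sumI: "(\<Sum>j\<in>I. a j) < th - d" using G I unfolding a_def by auto
  have "(\<Sum>j\<in>S. a j) \<le> (\<Sum>j\<in>I. a j)"
    using I by (intro sum_mono2) (auto simp: a_def intro: finite_subset less_imp_le arccot_pos)
  with sumI have sumS: "(\<Sum>j\<in>S. a j) < th - d" by simp
  have ne: "S \<noteq> {}" using S by auto
  have "(min (sin d) (sin th) * sin th ^ n) * (\<Prod>j\<in>S. lam j - cot th)
      = (min (sin d) (sin th) * sin th ^ n) * (\<Prod>j\<in>S. cot (a j) - cot th)"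
    by (simp add: a_def cot_arccot)
  also have "\<dots> \<le> sin (th - (\<Sum>j\<in>S. a j)) / (sin th * (\<Prod>j\<in>S. sin (a j)))"
    by (rule scalar_b[OF fin ne _ _ sumS th]) (use S in \<open>auto simp: a_def arccot_pos\<close>)
  also have "\<dots> = Re (\<Prod>j\<in>S. complex_of_real (lam j) + \<i>) - cot th * Im (\<Prod>j\<in>S. complex_of_real (lam j) + \<i>)"
    unfolding a_def using th by (intro coeff_G[symmetric] fin) auto
  finally show ?thesis .
qed

lemma lists_len_set: "xs \<in> lists_len n k \<Longrightarrow> set xs \<subseteq> {..<n} \<and> length xs = k"
  by (simp add: lists_len_def)

theorem lemma2p6:
  fixes n :: nat and \<theta> :: real
  assumes "0 < \<theta>" and "\<theta> < pi"
  shows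
   "(\<exists>C>0. \<forall>chi omega. posdef n chi \<and> hermitian n omega \<and> in_Gamma n chi omega \<theta> \<longrightarrow>
       form_ge n n
         (form_scale (of_real C)
            (form_pow (form11 n (\<lambda>i j. omega i j - of_real (cot \<theta>) * chi i j + chi i j)) n))
         (G_form \<theta> n (form11 n omega) (form11 n chi)))
  \<and> (\<forall>\<delta>. 0 < \<delta> \<and> \<delta> < \<theta> \<longrightarrow>
       (\<exists>\<epsilon>>0. \<forall>chi omega. posdef n chi \<and> hermitian n omega \<and> in_Gamma n chi omega (\<theta> - \<delta>) \<longrightarrow>
          (let \<Omega> = form11 n (\<lambda>i j. omega i j - of_real (cot \<theta>) * chi i j)
           in \<forall>k\<in>{1..n-1}.
                form_ge n k (P_form \<theta> k \<Omega> (form11 n chi)) (form_scale (of_real \<epsilon>) (form_pow \<Omega> k)))))"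
proof (intro conjI allI impI)
  have s: "0 < sin \<theta>" using assms by (intro sin_gt_zero) auto
  define C where "C = (if n \<le> 1 then 1 else 1 / sin \<theta> ^ (2 * n + 1))"
  have Cpos: "0 < C" unfolding C_def using s by simp
  show "\<exists>C>0. \<forall>chi omega. posdef n chi \<and> hermitian n omega \<and> in_Gamma n chi omega \<theta> \<longrightarrow>
       form_ge n n
         (form_scale (of_real C)
            (form_pow (form11 n (\<lambda>i j. omega i j - of_real (cot \<theta>) * chi i j + chi i j)) n))
         (G_form \<theta> n (form11 n omega) (form11 n chi))"
  proof (intro exI[of _ C] conjI allI impI)
    show "0 < C" by (rule Cpos)
    fix chi omega
    assume H: "posdef n chi \<and> hermitian n omega \<and> in_Gamma n chi omega \<theta>"
    then obtain lam where gen: "gen_eigenvalues n chi omega lam"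
      and G: "\<forall>I \<subseteq> {..<n}. card I = n - 1 \<longrightarrow> (\<Sum>i\<in>I. arccot (lam i)) < \<theta>"
      unfolding in_Gamma_def by blast
    obtain R where R: "form11 n chi = LF (\<lambda>j. rho n (\<lambda>a. R a j)) n (\<lambda>j. 1)"
      "form11 n omega = LF (\<lambda>j. rho n (\<lambda>a. R a j)) n (\<lambda>j. of_real (lam j))"
      "\<And>c. form11 n (\<lambda>i j. omega i j - of_real c * chi i j + chi i j)
        = LF (\<lambda>j. rho n (\<lambda>a. R a j)) n (\<lambda>j. of_real (lam j) - of_real c + 1)"
      "\<And>c. form11 n (\<lambda>i j. omega i j - of_real c * chi i j)
        = LF (\<lambda>j. rho n (\<lambda>a. R a j)) n (\<lambda>j. of_real (lam j) - of_real c)"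
      using decomp[OF gen] by blast
    show "form_ge n n
         (form_scale (of_real C)
            (form_pow (form11 n (\<lambda>i j. omega i j - of_real (cot \<theta>) * chi i j + chi i j)) n))
         (G_form \<theta> n (form11 n omega) (form11 n chi))"
      unfolding form_ge_def R form_pow_LF form_scale_SF G_form_LF form_diff_SF
    proof (rule pos_form_SF)
      show "finite (lists_len n n)" by simp
      show "oneform (rho n (\<lambda>a. R a j))" for j by (rule oneform_rho)
      fix xs assume xs: "xs \<in> lists_len n n" "distinct xs"
      define S where "S = set xs"
      have S: "S \<subseteq> {..<n}" "card S = n"
        using lists_len_set[OF xs(1)] xs(2) distinct_card unfolding S_def by auto
      have k: "Re (\<Prod>j\<in>S. complex_of_real (lam j) + \<i>) - cot \<theta> * Im (\<Prod>j\<in>S. complex_of_real (lam j) + \<i>)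
        \<le> C * (\<Prod>j\<in>S. lam j - cot \<theta> + 1)"
        unfolding C_def by (rule coeff_a[OF assms S G])
      have e: "complex_of_real C * prod_list (map (\<lambda>j. complex_of_real (lam j) - complex_of_real (cot \<theta>) + 1) xs) -
          complex_of_real (Re (prod_list (map (\<lambda>j. complex_of_real (lam j) + \<i> * 1) xs)) -
            cot \<theta> * Im (prod_list (map (\<lambda>j. complex_of_real (lam j) + \<i> * 1) xs)))
        = complex_of_real (C * (\<Prod>j\<in>S. lam j - cot \<theta> + 1) - (Re (\<Prod>j\<in>S. complex_of_real (lam j) + \<i>) - cot \<theta> * Im (\<Prod>j\<in>S. complex_of_real (lam j) + \<i>)))"
        using xs(2) unfolding S_def by (simp add: dist_prod)
      show "Im (complex_of_real C * prod_list (map (\<lambda>j. complex_of_real (lam j) - complex_of_real (cot \<theta>) + 1) xs) -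
          complex_of_real (Re (prod_list (map (\<lambda>j. complex_of_real (lam j) + \<i> * 1) xs)) -
            cot \<theta> * Im (prod_list (map (\<lambda>j. complex_of_real (lam j) + \<i> * 1) xs)))) = 0 \<and>
        0 \<le> Re (complex_of_real C * prod_list (map (\<lambda>j. complex_of_real (lam j) - complex_of_real (cot \<theta>) + 1) xs) -
          complex_of_real (Re (prod_list (map (\<lambda>j. complex_of_real (lam j) + \<i> * 1) xs)) -
            cot \<theta> * Im (prod_list (map (\<lambda>j. complex_of_real (lam j) + \<i> * 1) xs))))"
        unfolding e Im_complex_of_real Re_complex_of_real using k by linarith
    qed
  qed
next
  fix \<delta> :: real
  assume d: "0 < \<delta> \<and> \<delta> < \<theta>"
  show "\<exists>\<epsilon>>0. \<forall>chi omega. posdef n chi \<and> hermitian n omega \<and> in_Gamma n chi omega (\<theta> - \<delta>) \<longrightarrow>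
          (let \<Omega> = form11 n (\<lambda>i j. omega i j - of_real (cot \<theta>) * chi i j)
           in \<forall>k\<in>{1..n-1}.
                form_ge n k (P_form \<theta> k \<Omega> (form11 n chi)) (form_scale (of_real \<epsilon>) (form_pow \<Omega> k)))"
  proof -
    define \<epsilon> where "\<epsilon> = min (sin \<delta>) (sin \<theta>) * sin \<theta> ^ n"
    have s: "0 < sin \<theta>" using assms by (intro sin_gt_zero) auto
    have sd: "0 < sin \<delta>" using assms d by (intro sin_gt_zero) auto
    have epos: "0 < \<epsilon>" unfolding \<epsilon>_def using s sd by simp
    show ?thesis
    proof (intro exI[of _ \<epsilon>] conjI allI impI)
      show "0 < \<epsilon>" by (rule epos)
      fix chi omega
      assume H: "posdef n chi \<and> hermitian n omega \<and> in_Gamma n chi omega (\<theta> - \<delta>)"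
      then obtain lam where gen: "gen_eigenvalues n chi omega lam"
        and G: "\<forall>I \<subseteq> {..<n}. card I = n - 1 \<longrightarrow> (\<Sum>i\<in>I. arccot (lam i)) < \<theta> - \<delta>"
        unfolding in_Gamma_def by blast
      obtain R where R: "form11 n chi = LF (\<lambda>j. rho n (\<lambda>a. R a j)) n (\<lambda>j. 1)"
        "form11 n omega = LF (\<lambda>j. rho n (\<lambda>a. R a j)) n (\<lambda>j. of_real (lam j))"
        "\<And>c. form11 n (\<lambda>i j. omega i j - of_real c * chi i j + chi i j)
          = LF (\<lambda>j. rho n (\<lambda>a. R a j)) n (\<lambda>j. of_real (lam j) - of_real c + 1)"
        "\<And>c. form11 n (\<lambda>i j. omega i j - of_real c * chi i j)
          = LF (\<lambda>j. rho n (\<lambda>a. R a j)) n (\<lambda>j. of_real (lam j) - of_real c)"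
        using decomp[OF gen] by blast
      show "let \<Omega> = form11 n (\<lambda>i j. omega i j - of_real (cot \<theta>) * chi i j)
           in \<forall>k\<in>{1..n-1}.
                form_ge n k (P_form \<theta> k \<Omega> (form11 n chi)) (form_scale (of_real \<epsilon>) (form_pow \<Omega> k))"
        unfolding Let_def R(4) R(1)
      proof
        fix k assume k: "k \<in> {1..n-1}"
        show "form_ge n k (P_form \<theta> k (LF (\<lambda>j. rho n (\<lambda>a. R a j)) n (\<lambda>j. of_real (lam j) - of_real (cot \<theta>))) (LF (\<lambda>j. rho n (\<lambda>a. R a j)) n (\<lambda>j. 1)))
           (form_scale (of_real \<epsilon>) (form_pow (LF (\<lambda>j. rho n (\<lambda>a. R a j)) n (\<lambda>j. of_real (lam j) - of_real (cot \<theta>))) k))"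
          unfolding form_ge_def P_form_def form_scale_LF form_add_LF form_pow_LF form_scale_SF G_form_LF form_diff_SF
          apply (rule pos_form_SF)
            apply simp
           apply (rule oneform_rho)
          apply (simp only: lists_len_def mem_Collect_eq)
          apply (erule conjE)
          apply simp
          subgoal for xs
          proof -
            assume xs: "distinct xs" "set xs \<subseteq> {..<n}" "length xs = k"
            have pr1: "(\<Prod>j\<leftarrow>xs. complex_of_real (lam j) - complex_of_real (cot \<theta>)) = of_real (\<Prod>j\<in>set xs. lam j - cot \<theta>)"
              using xs(1) by (simp add: dist_prod)
            have pr2: "(\<Prod>j\<leftarrow>xs. complex_of_real (lam j) + \<i>) = (\<Prod>j\<in>set xs. complex_of_real (lam j) + \<i>)"
              using xs(1) by (simp add: dist_prod)
            have cb: "\<epsilon> * (\<Prod>j\<in>set xs. lam j - cot \<theta>) \<le> Re (\<Prod>j\<in>set xs. complex_of_real (lam j) + \<i>) - cot \<theta> * Im (\<Prod>j\<in>set xs. complex_of_real (lam j) + \<i>)"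
              unfolding \<epsilon>_def
              by (rule coeff_b[of \<delta> \<theta> "set xs" n k lam]) (use d assms xs k distinct_card[OF xs(1)] G in auto)
            show ?thesis unfolding pr1 pr2 Im_complex_of_real Re_complex_of_real using cb by simp
          qed
          done
      qed
    qed
  qed
qed

end
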